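(* Assume Assumptions 1 and 2 for some $\delta>0$. For distinct $u_1,u_2\in L$, let $N_{u_1u_2}$ be the number of common neighbors of $u_1$ and $u_2$ in the bipartite graph $G_b$. Then, as $n_R\to\infty$, $$\Pr[N_{u_1u_2}\ge 2\mid S_L,S_R,(u_1,u_2)\in E]=O(p_{u_1u_2}),$$ where $p_{u_1u_2}=\frac{M_{R2}}{M_{R1}^2}\cdot\frac{w_{u_1}w_{u_2}}{n_R}$.
   Context: Model: left nodes $L$ ($|L|=n_L$), right nodes $R$ ($|R|=n_R$), weight sequences $S_L=(w_u)_{u\in L}$, $S_R=(w_v)_{v\in R}$ of positive reals; $M_{Lk}=\frac1{n_L}\sum_{u\in L}w_u^k$, $M_{Rk}=\frac1{n_R}\sum_{v\in R}w_v^k$. The random bipartite graph $G_b=(L\sqcup R,E_b)$ contains each edge $(u,v)$, $u\in L$, $v\in R$, independently with probability $\min\left(\frac{w_uw_v}{n_RM_{R1}},1\right)$. The projected graph is $G=(L,E)$ with $(u,u')\in E$ for distinct $u,u'\in L$ iff there is $z\in R$ with $(u,z),(u',z)\in E_b$. Assumption 1: $\frac{w_uw_v}{n_RM_{R1}}\le1$ for all $u\in L,v\in R$. Assumption 2 (parameter $\delta>0$), as $n_L,n_R\to\infty$: $\max(S_L\cup S_R)=O(n_R^{1/2-\delta})$, $\min S_L=\Omega(1)$, $M_{R2}=O(M_{R1}^2)$, $M_{R4}=O(n_R^{1-2\delta})$. *)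

theory Defs
  imports "HOL-Probability.Probability" "HOL-Library.Landau_Symbols"
begin

text \<open>Left nodes are 0..<nL, right nodes are 0..<nR; weights are functions on nat.\<close>

definition moment :: "nat \<Rightarrow> (nat \<Rightarrow> real) \<Rightarrow> nat \<Rightarrow> real" where
  "moment n w k = (\<Sum>i<n. w i ^ k) / real n"

definition edge_prob :: "nat \<Rightarrow> (nat \<Rightarrow> real) \<Rightarrow> (nat \<Rightarrow> real) \<Rightarrow> nat \<Rightarrow> nat \<Rightarrow> real" where
  "edge_prob nR wL wR u v = min (wL u * wR v / (real nR * moment nR wR 1)) 1"

definition bip_graph :: "nat \<Rightarrow> nat \<Rightarrow> (nat \<Rightarrow> real) \<Rightarrow> (nat \<Rightarrow> real) \<Rightarrow> (nat \<times> nat \<Rightarrow> bool) pmf" where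
  "bip_graph nL nR wL wR =
     Pi_pmf ({..<nL} \<times> {..<nR}) False (\<lambda>(u, v). bernoulli_pmf (edge_prob nR wL wR u v))"

definition common_nbrs :: "nat \<Rightarrow> (nat \<times> nat \<Rightarrow> bool) \<Rightarrow> nat \<Rightarrow> nat \<Rightarrow> nat" where
  "common_nbrs nR Eb u1 u2 = card {z \<in> {..<nR}. Eb (u1, z) \<and> Eb (u2, z)}"

definition proj_edge :: "nat \<Rightarrow> (nat \<times> nat \<Rightarrow> bool) \<Rightarrow> nat \<Rightarrow> nat \<Rightarrow> bool" where
  "proj_edge nR Eb u u' \<longleftrightarrow> u \<noteq> u' \<and> (\<exists>z \<in> {..<nR}. Eb (u, z) \<and> Eb (u', z))"

definition cond_prob_pmf :: "'a pmf \<Rightarrow> 'a set \<Rightarrow> 'a set \<Rightarrow> real" where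
  "cond_prob_pmf p A B = measure_pmf.prob p (A \<inter> B) / measure_pmf.prob p B"

end

theory Submission
  imports Defs
begin

lemma abs_helper: "0 \<le> (a::real) \<and> a \<le> b \<Longrightarrow> \<bar>a\<bar> \<le> 1 * \<bar>b\<bar>"
  by linarith

lemma prob_pair_times:
  "measure_pmf.prob (pair_pmf M N) (A \<times> B) = measure_pmf.prob M A * measure_pmf.prob N B"
proof -
  have "measure_pmf.prob (pair_pmf M N) (A \<times> B) =
        measure_pmf.prob (pair_pmf M N) ((A \<inter> set_pmf M) \<times> (B \<inter> set_pmf N))"
    by (intro measure_prob_cong_0) (auto simp: pmf_pair set_pmf_eq)
  also have "\<dots> = measure_pmf.prob M (A \<inter> set_pmf M) * measure_pmf.prob N (B \<inter> set_pmf N)"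
    by (rule measure_pmf_prob_product) auto
  finally show ?thesis by (simp add: measure_Int_set_pmf)
qed

lemma Pi_indep:
  assumes fin: "finite I" and CI: "C \<subseteq> I"
    and X: "\<And>f g. (\<forall>x\<in>C. f x = g x) \<Longrightarrow> X f = X g"
    and Y: "\<And>f g. (\<forall>x. x \<notin> C \<longrightarrow> f x = g x) \<Longrightarrow> Y f = Y g"
  shows "measure_pmf.prob (Pi_pmf I d p) {f. X f \<and> Y f}
       = measure_pmf.prob (Pi_pmf I d p) {f. X f} * measure_pmf.prob (Pi_pmf I d p) {f. Y f}"
proof -
  have fC: "finite C" using fin CI finite_subset by blast
  have eq: "Pi_pmf I d p = map_pmf (\<lambda>(f,g) x. if x \<in> C then f x else g x)
             (pair_pmf (Pi_pmf C d p) (Pi_pmf (I - C) d p))"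
  proof -
    have "I = C \<union> (I - C)" using CI by blast
    then have "Pi_pmf I d p = Pi_pmf (C \<union> (I - C)) d p" by simp
    also have "\<dots> = map_pmf (\<lambda>(f,g) x. if x \<in> C then f x else g x)
             (pair_pmf (Pi_pmf C d p) (Pi_pmf (I - C) d p))" by (rule Pi_pmf_union) (use fin fC in auto)
    finally show ?thesis .
  qed
  let ?h = "(\<lambda>(f,g) x. if x \<in> C then f x else g x)"
  have hX: "X (?h (f,g)) = X f" for f g by (rule X) auto
  have hY: "Y (?h (f,g)) = Y g" for f g by (rule Y) auto
  have 1: "?h -` {f. X f \<and> Y f} = {f. X f} \<times> {g. Y g}" using hX hY by auto
  have 2: "?h -` {f. X f} = {f. X f} \<times> UNIV" using hX by auto
  have 3: "?h -` {f. Y f} = UNIV \<times> {g. Y g}" using hY by auto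
  show ?thesis unfolding eq measure_map_pmf 1 2 3 prob_pair_times by simp
qed

lemma Pi_coord:
  assumes "finite I" "a \<in> I"
  shows "measure_pmf.prob (Pi_pmf I d p) {f. f a} = measure_pmf.prob (p a) {True}"
proof -
  have "measure_pmf.prob (Pi_pmf I d p) {f. f a}
      = measure_pmf.prob (map_pmf (\<lambda>f. f a) (Pi_pmf I d p)) {True}"
    by (simp add: vimage_def)
  also have "\<dots> = measure_pmf.prob (p a) {True}" using assms by (simp add: Pi_pmf_component)
  finally show ?thesis .
qed

lemma pointwise:
  fixes nL nR :: nat and wL wR :: "nat \<Rightarrow> real" and u1 u2 :: nat
  assumes u: "u1 < nL" "u2 < nL" "u1 \<noteq> u2"
    and wL_pos: "\<And>u. u < nL \<Longrightarrow> wL u > 0"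
    and wR_pos: "\<And>v. v < nR \<Longrightarrow> wR v > 0"
    and assm1: "\<And>u v. u < nL \<Longrightarrow> v < nR \<Longrightarrow>
                  wL u * wR v / (real nR * moment nR wR 1) \<le> 1"
  shows "0 \<le> cond_prob_pmf (bip_graph nL nR wL wR)
                   {Eb. common_nbrs nR Eb u1 u2 \<ge> 2}
                   {Eb. proj_edge nR Eb u1 u2}
     \<and> cond_prob_pmf (bip_graph nL nR wL wR)
                   {Eb. common_nbrs nR Eb u1 u2 \<ge> 2}
                   {Eb. proj_edge nR Eb u1 u2}
           \<le> moment nR wR 2 / (moment nR wR 1)\<^sup>2 * (wL u1 * wL u2 / real nR)"
proof -
  define \<mu> where "\<mu> = bip_graph nL nR wL wR"
  define I where "I = {..<nL} \<times> {..<nR}"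
  define ep where "ep = edge_prob nR wL wR"
  define T where "T = {Eb. common_nbrs nR Eb u1 u2 \<ge> 2}"
  define E where "E = {Eb. proj_edge nR Eb u1 u2}"
  define M1 where "M1 = moment nR wR 1"
  define M2 where "M2 = moment nR wR 2"
  define X where "X = (\<lambda>z (f::nat\<times>nat\<Rightarrow>bool). f (u1,z) \<and> f (u2,z))"
  define Y where "Y = (\<lambda>z (f::nat\<times>nat\<Rightarrow>bool). \<exists>z'<nR. z' \<noteq> z \<and> X z' f)"
  have finI: "finite I" by (simp add: I_def)
  have mu: "\<mu> = Pi_pmf I False (\<lambda>(u, v). bernoulli_pmf (ep u v))"
    by (simp add: \<mu>_def bip_graph_def I_def ep_def)
  have M2nn: "M2 \<ge> 0" unfolding M2_def moment_def by (intro divide_nonneg_nonneg sum_nonneg) auto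
  have tgt_nn: "0 \<le> M2 / M1\<^sup>2 * (wL u1 * wL u2 / real nR)"
    using M2nn wL_pos[OF u(1)] wL_pos[OF u(2)] by simp
  have cnn: "0 \<le> cond_prob_pmf \<mu> T E" by (simp add: cond_prob_pmf_def)
  have TE: "T \<subseteq> E"
  proof
    fix f assume "f \<in> T"
    then have "card {z \<in> {..<nR}. f (u1, z) \<and> f (u2, z)} \<ge> 2" by (simp add: T_def common_nbrs_def)
    then have "{z \<in> {..<nR}. f (u1, z) \<and> f (u2, z)} \<noteq> {}" by (metis card.empty not_numeral_le_zero)
    then show "f \<in> E" using u by (auto simp: E_def proj_edge_def)
  qed
  show ?thesis
  proof (cases "measure_pmf.prob \<mu> E = 0")
    case True
    then show ?thesis using tgt_nn by (simp add: cond_prob_pmf_def \<mu>_def E_def T_def M1_def M2_def)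
  next
    case False
    have "nR > 0"
    proof (rule ccontr)
      assume "\<not> nR > 0" then have "E = {}" by (auto simp: E_def proj_edge_def)
      then show False using False by simp
    qed
    have M1pos: "M1 > 0" unfolding M1_def moment_def using \<open>nR > 0\<close> wR_pos
      by (intro divide_pos_pos sum_pos) auto
    have ep_eq: "ep u z = wL u * wR z / (real nR * M1)" if "u < nL" "z < nR" for u z
      using assm1[OF that] by (simp add: ep_def edge_prob_def M1_def)
    have ep_nn: "ep u z \<ge> 0" "ep u z \<le> 1" if "u < nL" "z < nR" for u z
      using ep_eq[OF that] assm1[OF that] wL_pos[OF that(1)] wR_pos[OF that(2)] M1pos \<open>nR>0\<close>
      by (auto simp: M1_def)
    define q where "q = (\<lambda>z. ep u1 z * ep u2 z)"
    have PX: "measure_pmf.prob \<mu> {f. X z f} = q z" if z: "z < nR" for z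
    proof -
      have "measure_pmf.prob \<mu> {f. f (u1,z) \<and> f (u2,z)}
          = measure_pmf.prob \<mu> {f. f (u1,z)} * measure_pmf.prob \<mu> {f. f (u2,z)}"
        unfolding mu by (rule Pi_indep[where C="{(u1,z)}"]) (use finI u z in \<open>auto simp: I_def\<close>)
      also have "\<dots> = q z"
        unfolding mu using finI u z ep_nn
        by (simp add: Pi_coord I_def measure_pmf_single q_def)
      finally show ?thesis by (simp add: X_def)
    qed
    have PXY: "measure_pmf.prob \<mu> {f. X z f \<and> Y z f} = q z * measure_pmf.prob \<mu> {f. Y z f}"
      if z: "z < nR" for z
    proof -
      have "measure_pmf.prob \<mu> {f. X z f \<and> Y z f}
          = measure_pmf.prob \<mu> {f. X z f} * measure_pmf.prob \<mu> {f. Y z f}"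
        unfolding mu
      proof (rule Pi_indep[where C="{(u1,z),(u2,z)}"])
        show "finite I" by (rule finI)
        show "{(u1,z),(u2,z)} \<subseteq> I" using u z by (auto simp: I_def)
        show "X z f = X z g" if "\<forall>x\<in>{(u1,z),(u2,z)}. f x = g x" for f g
          using that by (simp add: X_def)
        show "Y z f = Y z g" if "\<forall>x. x \<notin> {(u1,z),(u2,z)} \<longrightarrow> f x = g x" for f g
        proof -
          have "X z' f = X z' g" if "z' \<noteq> z" for z'
            using \<open>\<forall>x. x \<notin> {(u1,z),(u2,z)} \<longrightarrow> f x = g x\<close> that by (auto simp: X_def)
          then show ?thesis by (auto simp: Y_def)
        qed
      qed
      then show ?thesis using PX[OF z] by simp
    qed
    have YE: "{f. Y z f} \<subseteq> E" for z using u by (auto simp: Y_def X_def E_def proj_edge_def)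
    have Tsub: "T \<subseteq> (\<Union>z\<in>{..<nR}. {f. X z f \<and> Y z f})"
    proof
      fix f assume "f \<in> T"
      define S where "S = {z \<in> {..<nR}. f (u1, z) \<and> f (u2, z)}"
      have cS: "card S \<ge> 2" using \<open>f \<in> T\<close> by (simp add: T_def common_nbrs_def S_def)
      then have "S \<noteq> {}" by (metis card.empty not_numeral_le_zero)
      then obtain z where zS: "z \<in> S" by blast
      have "finite S" by (simp add: S_def)
      have "card (S - {z}) \<ge> 1" using cS zS \<open>finite S\<close> by (simp add: card_Diff_singleton)
      then have "S - {z} \<noteq> {}" by (metis card.empty not_one_le_zero)
      then obtain z' where "z' \<in> S - {z}" by blast
      then show "f \<in> (\<Union>z\<in>{..<nR}. {f. X z f \<and> Y z f})"
        using zS by (auto simp: S_def X_def Y_def)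
    qed
    have "measure_pmf.prob \<mu> T \<le> measure_pmf.prob \<mu> (\<Union>z\<in>{..<nR}. {f. X z f \<and> Y z f})"
      by (rule measure_pmf.finite_measure_mono[OF Tsub]) simp
    also have "\<dots> \<le> (\<Sum>z<nR. measure_pmf.prob \<mu> {f. X z f \<and> Y z f})"
      by (rule measure_pmf.finite_measure_subadditive_finite) auto
    also have "\<dots> = (\<Sum>z<nR. q z * measure_pmf.prob \<mu> {f. Y z f})"
      by (intro sum.cong refl PXY) auto
    also have "\<dots> \<le> (\<Sum>z<nR. q z * measure_pmf.prob \<mu> E)"
    proof (intro sum_mono mult_left_mono)
      fix z assume "z \<in> {..<nR}"
      show "measure_pmf.prob \<mu> {f. Y z f} \<le> measure_pmf.prob \<mu> E"
        by (rule measure_pmf.finite_measure_mono[OF YE]) simp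
      show "0 \<le> q z" using ep_nn u \<open>z \<in> {..<nR}\<close> by (simp add: q_def)
    qed
    finally have PT: "measure_pmf.prob \<mu> T \<le> (\<Sum>z<nR. q z) * measure_pmf.prob \<mu> E"
      by (simp add: sum_distrib_right)
    have sq: "(\<Sum>z<nR. q z) = M2 / M1\<^sup>2 * (wL u1 * wL u2 / real nR)"
    proof -
      have "(\<Sum>z<nR. q z) = (\<Sum>z<nR. wL u1 * wL u2 / (real nR * M1)^2 * wR z ^ 2)"
        by (intro sum.cong refl) (simp add: q_def ep_eq u power2_eq_square)
      also have "\<dots> = wL u1 * wL u2 / (real nR * M1)^2 * (\<Sum>z<nR. wR z ^ 2)"
        by (simp add: sum_distrib_left)
      also have "(\<Sum>z<nR. wR z ^ 2) = real nR * M2"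
        using \<open>nR > 0\<close> by (simp add: M2_def moment_def)
      finally show ?thesis using \<open>nR > 0\<close> M1pos by (simp add: field_simps power2_eq_square)
    qed
    have Ppos: "measure_pmf.prob \<mu> E > 0" using False by (simp add: zero_less_measure_iff)
    have "cond_prob_pmf \<mu> T E = measure_pmf.prob \<mu> T / measure_pmf.prob \<mu> E"
      using TE by (simp add: cond_prob_pmf_def Int_absorb2)
    also have "\<dots> \<le> (\<Sum>z<nR. q z)" using PT Ppos by (simp add: divide_le_eq)
    finally show ?thesis using cnn sq by (simp add: \<mu>_def T_def E_def M1_def M2_def)
  qed
qed

theorem mainTheorem5:
  fixes nL nR :: "nat \<Rightarrow> nat"
    and wL wR :: "nat \<Rightarrow> nat \<Rightarrow> real"
    and \<delta> :: real
  assumes nL_lim: "filterlim nL at_top sequentially"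
    and nR_lim: "filterlim nR at_top sequentially"
    and wL_pos: "\<And>m u. u < nL m \<Longrightarrow> wL m u > 0"
    and wR_pos: "\<And>m v. v < nR m \<Longrightarrow> wR m v > 0"
    and assm1: "\<And>m u v. u < nL m \<Longrightarrow> v < nR m \<Longrightarrow>
                  wL m u * wR m v / (real (nR m) * moment (nR m) (wR m) 1) \<le> 1"
    and delta_pos: "\<delta> > 0"
    and max_bound: "(\<lambda>m. Max (wL m ` {..<nL m} \<union> wR m ` {..<nR m}))
                      \<in> O(\<lambda>m. real (nR m) powr (1/2 - \<delta>))"
    and min_bound: "(\<lambda>m. Min (wL m ` {..<nL m})) \<in> \<Omega>(\<lambda>m. 1)"
    and M2_bound: "(\<lambda>m. moment (nR m) (wR m) 2) \<in> O(\<lambda>m. (moment (nR m) (wR m) 1)\<^sup>2)"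
    and M4_bound: "(\<lambda>m. moment (nR m) (wR m) 4) \<in> O(\<lambda>m. real (nR m) powr (1 - 2 * \<delta>))"
  shows "\<forall>u1 u2 :: nat \<Rightarrow> nat.
           (\<forall>m. u1 m < nL m \<and> u2 m < nL m \<and> u1 m \<noteq> u2 m) \<longrightarrow>
           (\<lambda>m. cond_prob_pmf (bip_graph (nL m) (nR m) (wL m) (wR m))
                   {Eb. common_nbrs (nR m) Eb (u1 m) (u2 m) \<ge> 2}
                   {Eb. proj_edge (nR m) Eb (u1 m) (u2 m)})
           \<in> O(\<lambda>m. moment (nR m) (wR m) 2 / (moment (nR m) (wR m) 1)\<^sup>2
                     * (wL m (u1 m) * wL m (u2 m) / real (nR m)))"
  proof (intro allI impI)
  fix u1 u2 :: "nat \<Rightarrow> nat"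
  assume h: "\<forall>m. u1 m < nL m \<and> u2 m < nL m \<and> u1 m \<noteq> u2 m"
  show "(\<lambda>m. cond_prob_pmf (bip_graph (nL m) (nR m) (wL m) (wR m))
                   {Eb. common_nbrs (nR m) Eb (u1 m) (u2 m) \<ge> 2}
                   {Eb. proj_edge (nR m) Eb (u1 m) (u2 m)})
           \<in> O(\<lambda>m. moment (nR m) (wR m) 2 / (moment (nR m) (wR m) 1)\<^sup>2
                     * (wL m (u1 m) * wL m (u2 m) / real (nR m)))"
  proof (rule bigoI[where c=1], rule always_eventually, rule allI)
    fix m
    have p: "0 \<le> cond_prob_pmf (bip_graph (nL m) (nR m) (wL m) (wR m))
                   {Eb. common_nbrs (nR m) Eb (u1 m) (u2 m) \<ge> 2}
                   {Eb. proj_edge (nR m) Eb (u1 m) (u2 m)}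
     \<and> cond_prob_pmf (bip_graph (nL m) (nR m) (wL m) (wR m))
                   {Eb. common_nbrs (nR m) Eb (u1 m) (u2 m) \<ge> 2}
                   {Eb. proj_edge (nR m) Eb (u1 m) (u2 m)}
           \<le> moment (nR m) (wR m) 2 / (moment (nR m) (wR m) 1)\<^sup>2 * (wL m (u1 m) * wL m (u2 m) / real (nR m))"
      by (rule pointwise) (use h wL_pos wR_pos assm1 in auto)
    show "norm (cond_prob_pmf (bip_graph (nL m) (nR m) (wL m) (wR m))
                   {Eb. common_nbrs (nR m) Eb (u1 m) (u2 m) \<ge> 2}
                   {Eb. proj_edge (nR m) Eb (u1 m) (u2 m)})
           \<le> 1 * norm (moment (nR m) (wR m) 2 / (moment (nR m) (wR m) 1)\<^sup>2
                     * (wL m (u1 m) * wL m (u2 m) / real (nR m)))"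
      unfolding real_norm_def by (rule abs_helper[OF p])
  qed
qed

end
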